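(* Let $N\ge 1$ be an integer and let $\lambda,\mu,B_1,B_2>0$ with $B_1<B_2$ and $\lambda\mu<B_1+NB_2$. Put $\beta=\frac{B_1}{NB_2}$ (so that $\sqrt{\beta N}=\sqrt{B_1/B_2}$). For $\alpha\in[0,1]$ satisfying the stability constraints $\alpha\lambda<B_1/\mu$ and $(1-\alpha)\lambda/N<B_2/\mu$, define the average system delay of the non-aggregated system $$D(\alpha)=\alpha\,\frac{1}{B_1/\mu-\alpha\lambda}+(1-\alpha)\,\frac{1}{B_2/\mu-(1-\alpha)\lambda/N}.$$ Then the minimum of $D$ over all feasible $\alpha$ is $$D_{\min,\mathrm{non\text{-}agg}}=\begin{cases}\dfrac{\mu N}{B_2N-\lambda\mu}, & \text{if } \dfrac{B_2N}{\lambda\mu}\bigl(1-\sqrt{\beta N}\bigr)\ge 1,\\[3mm] \dfrac{\lambda\mu(1+N)-B_2N\bigl(1-\sqrt{\beta N}\bigr)^2}{\lambda\,[B_2N(\beta+1)-\lambda\mu]}, & \text{otherwise.}\end{cases}$$ In the first case the minimizer is $\alpha_{opt}=0$; in the second case it is $$\alpha_{opt}=\frac{\lambda\mu\sqrt{\beta}/(B_2N)+\sqrt{\beta}\,(\sqrt{\beta N}-1)}{\lambda\mu(\sqrt{\beta}+\sqrt{N})/(B_2N)}.$$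
   Context: Non-aggregated hybrid WiFi–VLC system: one WiFi access point of downlink capacity $B_1$ and $N$ VLC access points each of downlink capacity $B_2$. Requests arrive as a Poisson process of rate $\lambda$; request sizes are i.i.d. exponential with mean $\mu$. Each request is sent, independently at random, entirely to the WiFi queue with probability $\alpha$, or otherwise entirely to one of the $N$ VLC queues chosen uniformly at random. Thus the WiFi queue is an M/M/1 queue with arrival rate $\alpha\lambda$ and service rate $B_1/\mu$, and each VLC queue is an M/M/1 queue with arrival rate $(1-\alpha)\lambda/N$ and service rate $B_2/\mu$; a request's system delay is its stationary sojourn time (arrival until fully served) in the queue it joins, so the average system delay is $D(\alpha)=\alpha D_{WiFi}+(1-\alpha)D_{VLC}$ with $D_{WiFi},D_{VLC}$ the M/M/1 mean sojourn times, which gives the formula in the claim. *)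

theory Defs
  imports Complex_Main
begin

text \<open>Average system delay of the non-aggregated hybrid WiFi-VLC system
  (M/M/1 mean sojourn times weighted by the routing probabilities).\<close>
definition avg_delay :: "real \<Rightarrow> real \<Rightarrow> real \<Rightarrow> real \<Rightarrow> nat \<Rightarrow> real \<Rightarrow> real" where
  "avg_delay lam mu B1 B2 N a =
     a * (1 / (B1 / mu - a * lam)) + (1 - a) * (1 / (B2 / mu - (1 - a) * lam / real N))"

definition feasible :: "real \<Rightarrow> real \<Rightarrow> real \<Rightarrow> real \<Rightarrow> nat \<Rightarrow> real set" where
  "feasible lam mu B1 B2 N =
     {a. 0 \<le> a \<and> a \<le> 1 \<and> a * lam < B1 / mu \<and> (1 - a) * lam / real N < B2 / mu}"

end

theory Submission
  imports Defs
begin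

lemma cs_bound:
  fixes s t n p q :: real
  assumes "s > 0" "t > 0" "n > 0"
  shows "(p + n*q)^2/(s + n*t) \<le> p^2/s + n*q^2/t"
proof -
  have k: "p^2*t/s + q^2*s/t - 2*p*q = (p*t - q*s)^2/(s*t)"
    using assms by (simp add: field_simps power2_eq_square)
  have "(p*t - q*s)^2/(s*t) \<ge> 0" using assms by simp
  hence h: "2*p*q \<le> p^2*t/s + q^2*s/t" using k by linarith
  have e: "(p^2/s + n*q^2/t)*(s+n*t) = p^2 + n^2*q^2 + n*(p^2*t/s + q^2*s/t)"
    using assms by (simp add: field_simps power2_eq_square)
  have "(p + n*q)^2 = p^2 + n^2*q^2 + n*(2*p*q)" by (simp add: power2_eq_square algebra_simps)
  also have "\<dots> \<le> (p^2/s + n*q^2/t)*(s+n*t)" unfolding e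
    using h assms by (simp add: mult_left_mono)
  finally have "(p + n*q)^2 \<le> (p^2/s + n*q^2/t)*(s+n*t)" .
  moreover have "s + n*t > 0" using assms by (simp add: add_pos_pos)
  ultimately show ?thesis by (simp add: divide_le_eq)
qed

lemma tangent:
  fixes s p c :: real
  assumes "s > 0"
  shows "2*p*c - c^2*s \<le> p^2/s"
proof -
  have "0 \<le> (p - c*s)^2" by simp
  hence "2*p*c*s - c^2*s^2 \<le> p^2" by (simp add: power2_eq_square algebra_simps)
  thus ?thesis using assms by (simp add: le_divide_eq power2_eq_square algebra_simps)
qed

lemma delay_eq:
  fixes lam mu B1 B2 a :: real and N :: nat
  assumes "lam > 0" "mu > 0" "N \<ge> 1"
    "B1/mu - a*lam \<noteq> 0" "B2/mu - (1-a)*lam/real N \<noteq> 0"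
  shows "avg_delay lam mu B1 B2 N a =
     ((B1/mu)/(B1/mu - a*lam) + real N*(B2/mu)/(B2/mu - (1-a)*lam/real N) - 1 - real N)/lam"
proof -
  define s where "s = B1/mu - a*lam"
  define t where "t = B2/mu - (1-a)*lam/real N"
  have n: "real N > 0" using assms by simp
  have "a = (B1/mu - s)/lam" using assms unfolding s_def by (simp add: field_simps)
  moreover have "1 - a = real N*(B2/mu - t)/lam" using assms n unfolding t_def by (simp add: field_simps)
  ultimately have "avg_delay lam mu B1 B2 N a = (B1/mu - s)/lam * (1/s) + real N*(B2/mu - t)/lam * (1/t)"
    unfolding avg_delay_def s_def t_def by metis
  also have "\<dots> = ((B1/mu)/s + real N*(B2/mu)/t - 1 - real N)/lam"
  proof -
    have "s \<noteq> 0" "t \<noteq> 0" using assms unfolding s_def t_def by auto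
    thus ?thesis using assms(1) by (simp add: field_simps)
  qed
  finally show ?thesis unfolding s_def t_def .
qed
theorem theorem1:
  fixes N :: nat and lam mu B1 B2 :: real
  assumes "N \<ge> 1" and "lam > 0" and "mu > 0" and "B1 > 0" and "B2 > 0"
    and "B1 < B2" and "lam * mu < B1 + real N * B2"
  defines "\<beta> \<equiv> B1 / (real N * B2)"
  defines "Dmin \<equiv> (if B2 * real N / (lam * mu) * (1 - sqrt (\<beta> * real N)) \<ge> 1
                    then mu * real N / (B2 * real N - lam * mu)
                    else (lam * mu * (1 + real N) - B2 * real N * (1 - sqrt (\<beta> * real N))\<^sup>2)
                         / (lam * (B2 * real N * (\<beta> + 1) - lam * mu)))"
  defines "a_opt \<equiv> (if B2 * real N / (lam * mu) * (1 - sqrt (\<beta> * real N)) \<ge> 1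
                    then 0
                    else (lam * mu * sqrt \<beta> / (B2 * real N) + sqrt \<beta> * (sqrt (\<beta> * real N) - 1))
                         / (lam * mu * (sqrt \<beta> + sqrt (real N)) / (B2 * real N)))"
  shows "(\<forall>a \<in> feasible lam mu B1 B2 N. Dmin \<le> avg_delay lam mu B1 B2 N a)
         \<and> a_opt \<in> feasible lam mu B1 B2 N \<and> avg_delay lam mu B1 B2 N a_opt = Dmin"
proof -
  define n where "n = real N"
  define x where "x = B1/mu"
  define y where "y = B2/mu"
  define p where "p = sqrt x"
  define q where "q = sqrt y"
  define r where "r = sqrt n"
  define C where "C = x + n*y - lam"
  have n0: "n > 0" using assms(1) unfolding n_def by simp
  have x0: "x > 0" and y0: "y > 0" using assms unfolding x_def y_def by auto
  have xy: "x < y" using assms unfolding x_def y_def by (simp add: divide_strict_right_mono)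
  have p0: "p > 0" and q0: "q > 0" and r0: "r > 0" using x0 y0 n0 unfolding p_def q_def r_def by auto
  have px: "p^2 = x" and qy: "q^2 = y" and rn: "r^2 = n" using x0 y0 n0 unfolding p_def q_def r_def by auto
  have pq: "p < q" using xy unfolding p_def q_def by simp
  have B1e: "B1 = mu*x" and B2e: "B2 = mu*y" using assms(3) unfolding x_def y_def by auto
  have C0: "C > 0"
  proof -
    have "lam*mu < (x + n*y)*mu" using assms(7) B1e B2e unfolding n_def by (simp add: algebra_simps)
    thus ?thesis unfolding C_def using assms(3) by simp
  qed
  have beta_eq: "\<beta> = x/(n*y)" unfolding \<beta>_def B1e B2e n_def using assms(3) by simp
  have sbn: "sqrt (\<beta> * real N) = p/q"
  proof -
    have "\<beta> * real N = x/y" unfolding beta_eq n_def[symmetric] using n0 by simp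
    thus ?thesis unfolding p_def q_def by (simp add: real_sqrt_divide)
  qed
  have sb: "sqrt \<beta> = p/(r*q)" unfolding beta_eq p_def q_def r_def
    by (simp add: real_sqrt_divide real_sqrt_mult)
  have cond: "(B2 * real N / (lam * mu) * (1 - sqrt (\<beta> * real N)) \<ge> 1) \<longleftrightarrow> n*(y - p*q) \<ge> lam"
  proof -
    have "B2 * real N / (lam * mu) * (1 - sqrt (\<beta> * real N)) = n*(y - p*q)/lam"
      unfolding sbn unfolding B2e n_def[symmetric] qy[symmetric] using assms(2,3) q0
      by (simp add: field_simps power2_eq_square)
    thus ?thesis using assms(2) by (simp add: le_divide_eq)
  qed
  have feas: "a \<in> feasible lam mu B1 B2 N \<longleftrightarrow> 0 \<le> a \<and> a \<le> 1 \<and> x - a*lam > 0 \<and> y - (1-a)*lam/n > 0" for a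
    unfolding feasible_def x_def y_def n_def by auto
  have dl: "avg_delay lam mu B1 B2 N a = (x/(x - a*lam) + n*y/(y - (1-a)*lam/n) - 1 - n)/lam"
    if "x - a*lam > 0" "y - (1-a)*lam/n > 0" for a
    using delay_eq[of lam mu N B1 a B2] that assms unfolding x_def y_def n_def by auto
  show ?thesis
  proof (cases "n*(y - p*q) \<ge> lam")
    case True
    define t0 where "t0 = y - lam/n"
    have t0pq: "t0 \<ge> p*q" using True n0 unfolding t0_def by (simp add: field_simps)
    have t00: "t0 > 0" using t0pq p0 q0 by (smt (verit) mult_pos_pos)
    have Dm: "Dmin = (1 + n*y/t0 - 1 - n)/lam"
    proof -
      have "Dmin = mu * n / (B2 * n - lam * mu)" unfolding Dmin_def using True cond n_def by simp
      also have "\<dots> = (mu * n) / (mu * (n*y - lam))" unfolding B2e by (simp add: algebra_simps)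
      also have "\<dots> = n/(n*y - lam)" using assms(3) by simp
      also have "\<dots> = (1 + n*y/t0 - 1 - n)/lam" unfolding t0_def using n0 assms(2) t00
        unfolding t0_def by (simp add: field_simps)
      finally show ?thesis .
    qed
    have ao: "a_opt = 0" unfolding a_opt_def using True cond by simp
    show ?thesis
    proof (intro conjI ballI)
      fix a assume "a \<in> feasible lam mu B1 B2 N"
      hence a: "0 \<le> a" "x - a*lam > 0" "y - (1-a)*lam/n > 0" using feas by auto
      define s where "s = x - a*lam"
      define t where "t = y - (1-a)*lam/n"
      have s0: "s > 0" and t0': "t > 0" using a s_def t_def by auto
      have h1: "2 - s/x \<le> x/s"
      proof -
        have "2*p*(1/p) - (1/p)^2*s \<le> p^2/s" by (rule tangent[OF s0])
        moreover have "2*p*(1/p) - (1/p)^2*s = 2 - s/x" using p0 px[symmetric]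
          by (simp add: power2_eq_square)
        ultimately show ?thesis using px by simp
      qed
      have h2: "2*y/t0 - y*t/t0^2 \<le> y/t"
      proof -
        have "2*q*(q/t0) - (q/t0)^2*t \<le> q^2/t" by (rule tangent[OF t0'])
        moreover have "2*q*(q/t0) - (q/t0)^2*t = 2*y/t0 - y*t/t0^2" using qy[symmetric]
          by (simp add: power2_eq_square)
        ultimately show ?thesis using qy by simp
      qed
      have id: "2 - s/x + n*(2*y/t0 - y*t/t0^2) - (1 + n*y/t0) = a*lam*(1/x - y/t0^2)"
      proof -
        have tt: "t = t0 + a*lam/n" unfolding t_def t0_def using n0 by (simp add: field_simps)
        show ?thesis unfolding tt s_def using x0 n0 t00
          by (simp add: field_simps power2_eq_square)
      qed
      have "x*y \<le> t0^2" using t0pq px qy p0 q0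
        by (metis mult_pos_pos less_imp_le power_mono power_mult_distrib)
      hence "y/t0^2 \<le> 1/x" using x0 t00 by (simp add: field_simps)
      hence "0 \<le> a*lam*(1/x - y/t0^2)" using a(1) assms(2) by simp
      hence "0 \<le> 2 - s/x + n*(2*y/t0 - y*t/t0^2) - (1 + n*y/t0)" using id by simp
      hence "1 + n*y/t0 \<le> 2 - s/x + n*(2*y/t0 - y*t/t0^2)" by (simp only: diff_ge_0_iff_ge)
      also have "\<dots> \<le> x/s + n*(y/t)" 
        using add_mono[OF h1 mult_left_mono[OF h2]] n0 by simp
      finally have "1 + n*y/t0 \<le> x/s + n*y/t" by simp
      hence "(1 + n*y/t0 - 1 - n)/lam \<le> (x/s + n*y/t - 1 - n)/lam"
        using assms(2) by (simp add: divide_right_mono)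
      thus "Dmin \<le> avg_delay lam mu B1 B2 N a" using Dm dl[OF a(2,3)] s_def t_def by simp
    next
      have "y - lam/n > 0" using t00 t0_def by simp
      thus "a_opt \<in> feasible lam mu B1 B2 N" unfolding ao feas using x0 by simp
    next
      have "y - lam/n > 0" using t00 t0_def by simp
      thus "avg_delay lam mu B1 B2 N a_opt = Dmin" unfolding ao Dm t0_def using dl[of 0] x0 by simp
    qed
  next
    case False
    define k where "k = C/(p + n*q)"
    have pnq: "p + n*q > 0" using p0 q0 n0 by (simp add: add_pos_pos)
    have k0: "k > 0" unfolding k_def using C0 pnq by simp
    have Cl: "C < x + n*p*q" using False unfolding C_def by (simp add: algebra_simps)
    have Dm: "Dmin = ((p+n*q)^2/C - 1 - n)/lam"
    proof -
      have "Dmin = (lam * mu * (1 + n) - B2 * n * (1 - p/q)\<^sup>2) / (lam * (B2 * n * (\<beta> + 1) - lam * mu))"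
        unfolding Dmin_def using False cond sbn n_def by simp
      also have "\<dots> = (mu*(lam*(1+n) - n*(q-p)^2)) / (mu*(lam*C))"
      proof -
        have e1: "B2 * n * (1 - p/q)\<^sup>2 = mu*(n*(q-p)^2)" unfolding B2e qy[symmetric] using q0
          by (simp add: field_simps power2_eq_square)
        have e2: "lam * (B2 * n * (\<beta> + 1) - lam * mu) = mu*(lam*C)"
          unfolding B2e beta_eq C_def using n0 y0 by (simp add: field_simps)
        show ?thesis unfolding e1 e2 by (simp add: algebra_simps)
      qed
      also have "\<dots> = (lam*(1+n) - n*(q-p)^2) / (lam*C)" using assms(3) by simp
      also have "\<dots> = ((p+n*q)^2 - (1+n)*C)/(lam*C)"
      proof -
        have "lam*(1+n) - n*(q-p)^2 = (p+n*q)^2 - (1+n)*C"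
          unfolding C_def px[symmetric] qy[symmetric] by (simp add: power2_eq_square algebra_simps)
        thus ?thesis by simp
      qed
      also have "\<dots> = ((p+n*q)^2/C - 1 - n)/lam" using C0 assms(2)
        by (simp add: field_simps)
      finally show ?thesis .
    qed
    have ao: "a_opt = (x - p*k)/lam"
    proof -
      have "a_opt = (lam * mu * (p/(r*q)) / (B2 * n) + (p/(r*q)) * (p/q - 1))
                         / (lam * mu * ((p/(r*q)) + r) / (B2 * n))"
        unfolding a_opt_def using False cond sbn sb n_def r_def by simp
      also have "\<dots> = (p/(r*q))*(lam + n*q*(p-q))/(lam*((p/(r*q)) + r))"
      proof -
        define S where "S = p/(r*q)"
        have sp: "S + r > 0" using p0 q0 r0 unfolding S_def by (simp add: add_pos_pos)
        have "(lam * mu * S / (mu*q^2 * n) + S * (p/q - 1)) / (lam * mu * (S + r) / (mu*q^2 * n))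
             = S*(lam + n*q*(p-q))/(lam*(S + r))"
        proof -
          define M where "M = q^2*n"
          have M0: "M > 0" unfolding M_def using assms(3) q0 n0 by simp
          have e1: "lam * mu * S / (mu*q^2 * n) + S * (p/q - 1) = S*(lam + n*q*(p-q))/M"
            unfolding M_def using assms(3) q0 n0 by (simp add: field_simps power2_eq_square)
          have e2: "lam * mu * (S + r) / (mu*q^2 * n) = lam*(S + r)/M"
            unfolding M_def using assms(3) by simp
          show ?thesis unfolding e1 e2 using M0 by simp
        qed
        thus ?thesis unfolding B2e qy[symmetric] S_def .
      qed
      also have "\<dots> = p*(lam + n*q*(p-q))/(lam*(p + n*q))"
      proof -
        define X where "X = lam + n*q*(p-q)"
        have rq: "r*q > 0" using r0 q0 by simp
        have e1: "p/(r*q)*X = (p*X)/(r*q)" by simp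
        have e2: "p/(r*q) + r = (p + n*q)/(r*q)" unfolding rn[symmetric] using rq q0 r0
          by (simp add: field_simps power2_eq_square)
        have "(p*X)/(r*q) / (lam*((p + n*q)/(r*q))) = p*X/(lam*(p+n*q))" using rq q0 r0 by simp
        thus ?thesis unfolding X_def[symmetric] e1 e2 .
      qed
      also have "\<dots> = (x - p*k)/lam"
        unfolding k_def C_def px[symmetric] qy[symmetric] using pnq assms(2)
        by (simp add: field_simps power2_eq_square algebra_simps)
      finally show ?thesis .
    qed
    have sa: "x - a_opt*lam = p*k" unfolding ao using assms(2) by simp
    have ta: "y - (1-a_opt)*lam/n = q*k"
    proof -
      have Ck: "p*k + n*(q*k) = C"
      proof -
        have "p*k + n*(q*k) = (p+n*q)*k" by (simp add: algebra_simps)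
        also have "\<dots> = C" unfolding k_def using pnq by simp
        finally show ?thesis .
      qed
      have "y - (1-a_opt)*lam/n = (n*y - lam + x - (x - a_opt*lam))/n" using n0 by (simp add: field_simps)
      also have "\<dots> = (C - p*k)/n" unfolding sa C_def by simp
      also have "\<dots> = q*k" using Ck[symmetric] n0 by simp
      finally show ?thesis .
    qed
    show ?thesis
    proof (intro conjI ballI)
      fix a assume "a \<in> feasible lam mu B1 B2 N"
      hence a: "x - a*lam > 0" "y - (1-a)*lam/n > 0" using feas by auto
      define s where "s = x - a*lam"
      define t where "t = y - (1-a)*lam/n"
      have s0: "s > 0" and t0': "t > 0" using a s_def t_def by auto
      have "s + n*t = C" unfolding s_def t_def C_def using n0 by (simp add: field_simps)
      hence "(p+n*q)^2/C \<le> x/s + n*y/t" using cs_bound[OF s0 t0' n0, of p q] px qy by simp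
      hence "((p+n*q)^2/C - 1 - n)/lam \<le> (x/s + n*y/t - 1 - n)/lam"
        using assms(2) by (simp add: divide_right_mono)
      thus "Dmin \<le> avg_delay lam mu B1 B2 N a" using Dm dl[OF a] s_def t_def by simp
    next
      have "p*k \<le> x"
      proof -
        have "p*C < p*(x + n*p*q)" using Cl p0 by (simp add: mult_strict_left_mono)
        also have "\<dots> = x*(p+n*q)" unfolding px[symmetric] by (simp add: power2_eq_square algebra_simps)
        finally have "p*C \<le> x*(p+n*q)" by simp
        thus ?thesis unfolding k_def using pnq by (simp add: field_simps)
      qed
      moreover have "x - p*k \<le> lam"
      proof -
        have "p*C - (x-lam)*(p+n*q) = n*q*(p*q - x + lam)" unfolding C_def qy[symmetric]
          by (simp add: power2_eq_square algebra_simps)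
        moreover have "p*q - x + lam > 0" using pq p0 px assms(2)
          by (smt (verit) mult_strict_left_mono power2_eq_square)
        ultimately have "(x-lam)*(p+n*q) \<le> p*C" using n0 q0 
          by (smt (verit) mult_pos_pos)
        thus ?thesis unfolding k_def using pnq by (simp add: field_simps)
      qed
      ultimately have "0 \<le> a_opt" "a_opt \<le> 1" unfolding ao using assms(2)
        by (simp_all add: divide_le_eq)
      thus "a_opt \<in> feasible lam mu B1 B2 N" unfolding feas sa ta
        using p0 q0 k0 by simp
    next
      have "avg_delay lam mu B1 B2 N a_opt = (x/(p*k) + n*y/(q*k) - 1 - n)/lam"
        using dl[of a_opt] sa ta p0 q0 k0 by simp
      also have "x/(p*k) + n*y/(q*k) = (p+n*q)^2/C"
      proof -
        have "x/(p*k) + n*y/(q*k) = (p + n*q)/k" unfolding px[symmetric] qy[symmetric]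
          using p0 q0 k0 by (simp add: field_simps power2_eq_square)
        also have "\<dots> = (p+n*q)^2/C" unfolding k_def using pnq C0
          by (simp add: power2_eq_square)
        finally show ?thesis .
      qed
      also have "((p+n*q)^2/C - 1 - n)/lam = Dmin" using Dm by simp
      finally show "avg_delay lam mu B1 B2 N a_opt = Dmin" .
    qed
  qed
qed
end
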